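(* Let $G$ be a finite abelian group and let $\rho\ge4$ be an integer. If $A$ is a generating set for $G$ such that $\operatorname{diam}^+_A(G)\ge\rho$ and $|A|>\frac{3}{2\rho}|G|$, then there exist a subgroup $H\le G$ and an element $g\in G$ such that: (i) $A\subseteq H\cup(g+H)$ and $|A|>\left(2-\frac{\rho-3}{2\rho}\right)|H|$; (ii) $G/H$ is cyclic, $\rho+1\le|G/H|<\frac43\rho$, and $g+H$ generates $G/H$.
   Context: Groups are written additively. For $A\subseteq G$ let $A_0:=A\cup\{0\}$ and $\langle A\rangle^+_\rho:=\rho A_0=\{a_1+\dots+a_\rho:a_i\in A_0\}$. $\operatorname{diam}^+_A(G):=\min\{\rho\in\mathbb{N}_0:\langle A\rangle^+_\rho=G\}$ ($\min\varnothing=\infty$). *)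

theory Defs
  imports Main "HOL-Library.Extended_Nat"
begin

text \<open>The ambient finite abelian group G is the universe of a type 'a :: {finite, ab_group_add}.\<close>

definition add_subgroup :: "'a::ab_group_add set \<Rightarrow> bool" where
  "add_subgroup H \<longleftrightarrow> 0 \<in> H \<and> (\<forall>x\<in>H. \<forall>y\<in>H. x + y \<in> H) \<and> (\<forall>x\<in>H. - x \<in> H)"

definition gen_subgroup :: "'a::ab_group_add set \<Rightarrow> 'a set" where
  "gen_subgroup S = \<Inter>{H. add_subgroup H \<and> S \<subseteq> H}"

fun sumset_pow :: "'a::ab_group_add set \<Rightarrow> nat \<Rightarrow> 'a set" where
  "sumset_pow A 0 = {0}"
| "sumset_pow A (Suc n) = {a + b | a b. a \<in> insert 0 A \<and> b \<in> sumset_pow A n}"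

definition diam_plus :: "'a::ab_group_add set \<Rightarrow> enat" where
  "diam_plus A = (if \<exists>r. sumset_pow A r = UNIV
                  then enat (LEAST r. sumset_pow A r = UNIV) else \<infinity>)"

definition coset :: "'a::ab_group_add \<Rightarrow> 'a set \<Rightarrow> 'a set" where
  "coset g H = (\<lambda>h. g + h) ` H"

definition quotient_cosets :: "'a::ab_group_add set \<Rightarrow> 'a set set" where
  "quotient_cosets H = (\<lambda>x. coset x H) ` UNIV"

text \<open>The coset g+H generates G/H: the subgroup of G/H generated by g+H is all of G/H,
  equivalently its preimage, the subgroup of G generated by g and H, is G.\<close>
definition coset_generates :: "'a::ab_group_add \<Rightarrow> 'a set \<Rightarrow> bool" where
  "coset_generates g H \<longleftrightarrow> gen_subgroup (insert g H) = UNIV"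

definition quotient_cyclic :: "'a::ab_group_add set \<Rightarrow> bool" where
  "quotient_cyclic H \<longleftrightarrow> (\<exists>c. coset_generates c H)"

end

theory Submission
  imports Defs
begin

definition ss :: "'a::ab_group_add set \<Rightarrow> 'a set \<Rightarrow> 'a set" where
  "ss X Y = {x + y | x y. x \<in> X \<and> y \<in> Y}"

lemma ss_mono: "X \<subseteq> X' \<Longrightarrow> Y \<subseteq> Y' \<Longrightarrow> ss X Y \<subseteq> ss X' Y'"
  unfolding ss_def by blast

lemma ss_Un: "ss (X \<union> Y) B = ss X B \<union> ss Y B"
  unfolding ss_def by blast

lemma ss_Int: "ss (X \<inter> Y) B \<subseteq> ss X B \<inter> ss Y B"
  unfolding ss_def by blast

lemma ss_zero: "0 \<in> B \<Longrightarrow> X \<subseteq> ss X B"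
  unfolding ss_def by force

lemma ss_translate: "ss ((\<lambda>x. x + t) ` X) B = (\<lambda>x. x + t) ` ss X B"
  unfolding ss_def
proof (intro set_eqI iffI)
  fix z assume "z \<in> {x + y |x y. x \<in> (\<lambda>x. x + t) ` X \<and> y \<in> B}"
  then obtain x y where "x \<in> X" "y \<in> B" "z = (x + t) + y" by blast
  then show "z \<in> (\<lambda>x. x + t) ` {x + y |x y. x \<in> X \<and> y \<in> B}"
    by (intro image_eqI[of _ _ "x + y"]) (auto simp: algebra_simps)
next
  fix z assume "z \<in> (\<lambda>x. x + t) ` {x + y |x y. x \<in> X \<and> y \<in> B}"
  then obtain x y where "x \<in> X" "y \<in> B" "z = (x + y) + t" by blast
  moreover have "z = (x + t) + y" using calculation by (simp add: algebra_simps)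
  ultimately show "z \<in> {x + y |x y. x \<in> (\<lambda>x. x + t) ` X \<and> y \<in> B}"
    by blast
qed

definition FF :: "'a::ab_group_add set \<Rightarrow> 'a set set" where
  "FF B = {X. X \<noteq> {} \<and> ss X B \<noteq> UNIV}"

definition bd :: "'a::ab_group_add set \<Rightarrow> 'a set \<Rightarrow> int" where
  "bd B X = int (card (ss X B)) - int (card X)"

definition kap :: "'a::ab_group_add set \<Rightarrow> int" where
  "kap B = Min (bd B ` FF B)"

definition frag :: "'a::ab_group_add set \<Rightarrow> 'a set \<Rightarrow> bool" where
  "frag B X \<longleftrightarrow> X \<in> FF B \<and> bd B X = kap B"

definition alph :: "'a::ab_group_add set \<Rightarrow> nat" where
  "alph B = Min (card ` {X. frag B X})"

definition atom :: "'a::ab_group_add set \<Rightarrow> 'a set \<Rightarrow> bool" where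
  "atom B X \<longleftrightarrow> frag B X \<and> card X = alph B"

lemma kap_le:
  fixes B :: "'a::{finite,ab_group_add} set"
  shows "X \<in> FF B \<Longrightarrow> kap B \<le> bd B X"
  unfolding kap_def by (rule Min_le) auto

lemma frag_ex:
  fixes B :: "'a::{finite,ab_group_add} set"
  assumes "FF B \<noteq> {}" shows "\<exists>X. frag B X"
proof -
  have "kap B \<in> bd B ` FF B" unfolding kap_def using assms by (intro Min_in) auto
  then show ?thesis unfolding frag_def by auto
qed

lemma atom_ex:
  fixes B :: "'a::{finite,ab_group_add} set"
  assumes "\<exists>X. frag B X" shows "\<exists>X. atom B X"
proof -
  have "alph B \<in> card ` {X. frag B X}" unfolding alph_def using assms by (intro Min_in) auto
  then show ?thesis unfolding atom_def by auto
qed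

lemma alph_le:
  fixes B :: "'a::{finite,ab_group_add} set"
  shows "frag B Y \<Longrightarrow> alph B \<le> card Y"
  unfolding alph_def by (rule Min_le) auto

lemma dual_bound:
  fixes B :: "'a::{finite,ab_group_add} set"
  assumes "frag B X"
  shows "alph B \<le> card (UNIV - ss X B)"
proof -
  define Y where "Y = uminus ` (UNIV - ss X B)"
  have X: "X \<noteq> {}" "ss X B \<noteq> UNIV" "bd B X = kap B" using assms unfolding frag_def FF_def by auto
  have cY: "card Y = card (UNIV - ss X B)" unfolding Y_def by (rule card_image) (simp add: inj_on_def)
  have sub: "ss Y B \<subseteq> UNIV - uminus ` X"
  proof
    fix z assume "z \<in> ss Y B"
    then obtain x' b where x': "x' \<notin> ss X B" "b \<in> B" "z = - x' + b" unfolding ss_def Y_def by blast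
    have "z \<notin> uminus ` X"
    proof
      assume "z \<in> uminus ` X"
      then obtain x where "x \<in> X" "z = - x" by blast
      then have "x' = x + b" using x' by (metis add.commute add_minus_cancel minus_add_cancel minus_unique add.assoc)
      then have "x' \<in> ss X B" unfolding ss_def using \<open>x \<in> X\<close> x' by blast
      then show False using x' by blast
    qed
    then show "z \<in> UNIV - uminus ` X" by simp
  qed
  have cX: "card (uminus ` X) = card X" by (simp add: card_image inj_on_def)
  have cU: "card (UNIV - uminus ` X) = card (UNIV::'a set) - card X"
    using card_Diff_subset[of "uminus ` X" UNIV] cX by simp
  have "Y \<noteq> {}" using X unfolding Y_def by auto
  moreover have "ss Y B \<noteq> UNIV" using sub X(1) by auto
  ultimately have YF: "Y \<in> FF B" unfolding FF_def by auto
  have c1: "card (ss Y B) \<le> card (UNIV::'a set) - card X" using card_mono[OF _ sub] cU by simp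
  have c2: "card (UNIV - ss X B) = card (UNIV::'a set) - card (ss X B)"
    by (simp add: card_Diff_subset)
  have le1: "card X \<le> card (UNIV :: 'a set)" "card (ss X B) \<le> card (UNIV :: 'a set)" by (auto intro: card_mono)
  have "bd B Y \<le> bd B X" unfolding bd_def using c1 c2 cY le1 by linarith
  then have "frag B Y" using kap_le[OF YF] X(3) YF unfolding frag_def by auto
  then show ?thesis using alph_le cY by fastforce
qed

lemma atom_inter:
  fixes B :: "'a::{finite,ab_group_add} set"
  assumes aX: "atom B X" and aY: "atom B Y" and ne: "X \<inter> Y \<noteq> {}"
  shows "X = Y"
proof (rule ccontr)
  assume neq: "X \<noteq> Y"
  have fX: "frag B X" and fY: "frag B Y" and cX: "card X = alph B" and cY: "card Y = alph B"
    using aX aY unfolding atom_def by auto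
  have XF: "X \<in> FF B" and YF: "Y \<in> FF B" and bX: "bd B X = kap B" and bY: "bd B Y = kap B"
    using fX fY unfolding frag_def by auto
  have IF: "X \<inter> Y \<in> FF B"
  proof -
    have "ss (X \<inter> Y) B \<subseteq> ss X B" by (rule ss_mono) auto
    then show ?thesis using ne XF unfolding FF_def by auto
  qed
  have kI: "kap B \<le> bd B (X \<inter> Y)" by (rule kap_le[OF IF])
  have UI: "card (ss X B \<union> ss Y B) + card (ss X B \<inter> ss Y B) = card (ss X B) + card (ss Y B)"
    using card_Un_Int[of "ss X B" "ss Y B"] by simp
  have cI: "card (ss (X \<inter> Y) B) \<le> card (ss X B \<inter> ss Y B)"
    by (rule card_mono) (use ss_Int[of X Y B] in auto)
  have UI2: "card (X \<union> Y) + card (X \<inter> Y) = card X + card Y"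
    using card_Un_Int[of X Y] by simp
  have sub: "X \<inter> Y \<subset> X"
  proof -
    have "\<not> X \<subseteq> Y"
    proof
      assume "X \<subseteq> Y"
      then have "X = Y" using cX cY by (intro card_subset_eq) auto
      then show False using neq by simp
    qed
    then show ?thesis by auto
  qed
  have lt: "card (X \<inter> Y) < card X" by (rule psubset_card_mono) (auto simp: sub)
  show False
  proof (cases "ss (X \<union> Y) B = UNIV")
    case False
    then have UF: "X \<union> Y \<in> FF B" using XF unfolding FF_def by auto
    have kU: "kap B \<le> bd B (X \<union> Y)" by (rule kap_le[OF UF])
    have "bd B (X \<inter> Y) = kap B"
      using kU kI UI cI UI2 bX bY unfolding bd_def ss_Un by linarith
    then have "frag B (X \<inter> Y)" using IF unfolding frag_def by auto
    then have "alph B \<le> card (X \<inter> Y)" by (rule alph_le)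
    then show False using lt cX by simp
  next
    case True
    then have "card (ss X B \<union> ss Y B) = card (UNIV :: 'a set)" by (simp add: ss_Un)
    moreover have "alph B \<le> card (UNIV - ss X B)" by (rule dual_bound[OF fX])
    moreover have "card (UNIV - ss X B) = card (UNIV :: 'a set) - card (ss X B)"
      by (simp add: card_Diff_subset)
    moreover have "card (ss X B) \<le> card (UNIV :: 'a set)" by (auto intro: card_mono)
    moreover have "card (X \<inter> Y) \<ge> 1" using ne by (simp add: Suc_le_eq card_gt_0_iff)
    ultimately show False
      using kI UI cI bX bY cX cY unfolding bd_def by linarith
  qed
qed

lemma atom_translate:
  fixes B :: "'a::{finite,ab_group_add} set"
  assumes "atom B X"
  shows "atom B ((\<lambda>x. x + t) ` X)"
proof -
  have inj: "inj (\<lambda>x::'a. x + t)" by (simp add: inj_on_def)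
  have c1: "card ((\<lambda>x. x + t) ` X) = card X" using inj by (simp add: card_image inj_on_def)
  have c2: "card (ss ((\<lambda>x. x + t) ` X) B) = card (ss X B)"
    unfolding ss_translate using inj by (simp add: card_image inj_on_def)
  have u: "ss ((\<lambda>x. x + t) ` X) B \<noteq> UNIV" if "ss X B \<noteq> UNIV"
  proof
    assume "ss ((\<lambda>x. x + t) ` X) B = UNIV"
    then have "card (ss X B) = card (UNIV :: 'a set)" using c2 by simp
    then have "ss X B = UNIV" by (intro card_subset_eq) auto
    then show False using that by simp
  qed
  show ?thesis using assms u c1 c2 unfolding atom_def frag_def FF_def bd_def by auto
qed

lemma atom_subgroup:
  fixes B :: "'a::{finite,ab_group_add} set"
  assumes aH: "atom B H" and z: "0 \<in> H"
  shows "add_subgroup H"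
proof -
  have diff: "x - h \<in> H" if "x \<in> H" "h \<in> H" for x h
  proof -
    have "atom B ((\<lambda>x. x + - h) ` H)" by (rule atom_translate[OF aH])
    moreover have "0 \<in> (\<lambda>x. x + - h) ` H" using that by force
    ultimately have "(\<lambda>x. x + - h) ` H = H" using atom_inter[OF _ aH] z by blast
    then show ?thesis using that by (metis diff_conv_add_uminus image_eqI)
  qed
  show ?thesis unfolding add_subgroup_def
  proof (intro conjI ballI)
    show "0 \<in> H" by (rule z)
  next
    fix x assume "x \<in> H" then show "- x \<in> H" using diff[OF z] by simp
  next
    fix x y assume "x \<in> H" "y \<in> H"
    then have "- y \<in> H" using diff[OF z] by simp
    then show "x + y \<in> H" using diff[OF \<open>x \<in> H\<close>] by fastforce
  qed
qed

lemma hamidoune: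
  fixes B :: "'a::{finite,ab_group_add} set"
  assumes "0 \<in> B" "B \<noteq> UNIV"
  shows "\<exists>H. add_subgroup H \<and> ss H B \<noteq> UNIV \<and>
    (\<forall>X. X \<noteq> {} \<longrightarrow> ss X B \<noteq> UNIV \<longrightarrow> int (card (ss H B)) - int (card H) \<le> int (card (ss X B)) - int (card X))"
proof -
  have "ss {0} B = B" unfolding ss_def by auto
  then have "{0} \<in> FF B" using assms unfolding FF_def by auto
  then obtain X0 where "atom B X0" using frag_ex atom_ex by blast
  then have "X0 \<noteq> {}" unfolding atom_def frag_def FF_def by auto
  then obtain x0 where "x0 \<in> X0" by blast
  define H where "H = (\<lambda>x. x + - x0) ` X0"
  have aH: "atom B H" unfolding H_def by (rule atom_translate) fact
  have "0 \<in> H" unfolding H_def using \<open>x0 \<in> X0\<close> by force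
  then have sg: "add_subgroup H" by (rule atom_subgroup[OF aH])
  have HF: "H \<in> FF B" and bH: "bd B H = kap B" using aH unfolding atom_def frag_def by auto
  show ?thesis
  proof (intro exI conjI allI impI)
    show "add_subgroup H" by (rule sg)
    show "ss H B \<noteq> UNIV" using HF unfolding FF_def by auto
    fix X :: "'a set" assume "X \<noteq> {}" "ss X B \<noteq> UNIV"
    then have "X \<in> FF B" unfolding FF_def by auto
    from kap_le[OF this] bH show "int (card (ss H B)) - int (card H) \<le> int (card (ss X B)) - int (card X)"
      unfolding bd_def by simp
  qed
qed


lemma sp_Suc: "sumset_pow A (Suc k) = ss (sumset_pow A k) (insert 0 A)"
  unfolding ss_def
proof (intro set_eqI iffI)
  fix z assume "z \<in> sumset_pow A (Suc k)"
  then obtain a b where "z = a + b" "a \<in> insert 0 A" "b \<in> sumset_pow A k"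
    by (simp only: sumset_pow.simps) blast
  moreover then have "z = b + a" by (simp add: add.commute)
  ultimately show "z \<in> {x + y |x y. x \<in> sumset_pow A k \<and> y \<in> insert 0 A}"
    by blast
next
  fix z assume "z \<in> {x + y |x y. x \<in> sumset_pow A k \<and> y \<in> insert 0 A}"
  then obtain a b where "z = b + a" "a \<in> insert 0 A" "b \<in> sumset_pow A k" by auto
  then have "z = a + b" by (simp add: add.commute)
  then show "z \<in> sumset_pow A (Suc k)" using \<open>a \<in> insert 0 A\<close> \<open>b \<in> sumset_pow A k\<close>
    by (simp only: sumset_pow.simps) blast
qed

lemma sp_zero: "0 \<in> sumset_pow A k"
proof (induction k)
  case (Suc k)
  have "(0::'a) = 0 + 0" by simp
  then show ?case using Suc by (simp only: sumset_pow.simps) blast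
qed simp

lemma sp_mono_Suc: "sumset_pow A k \<subseteq> sumset_pow A (Suc k)"
  unfolding sp_Suc by (rule ss_zero) simp

lemma sp_mono: "k \<le> m \<Longrightarrow> sumset_pow A k \<subseteq> sumset_pow A m"
proof (induction m)
  case 0 then show ?case by simp
next
  case (Suc m)
  then show ?case using sp_mono_Suc[of A m] by (cases "k = Suc m") auto
qed

lemma sp_one: "sumset_pow A (Suc 0) = insert 0 A"
  by auto

lemma diam_not_univ:
  assumes "diam_plus A \<ge> enat r" "r \<ge> 1"
  shows "sumset_pow A (r - 1) \<noteq> UNIV"
proof
  assume U: "sumset_pow A (r - 1) = UNIV"
  then have ex: "\<exists>r. sumset_pow A r = UNIV" by blast
  have "(LEAST r. sumset_pow A r = UNIV) \<le> r - 1" by (rule Least_le) (rule U)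
  then have "diam_plus A \<le> enat (r - 1)" unfolding diam_plus_def using ex by simp
  then show False using assms by (cases "diam_plus A") auto
qed

lemma coset_card: "card (coset g H) = card H"
  unfolding coset_def by (rule card_image) (simp add: inj_on_def)

lemma coset_self: "add_subgroup H \<Longrightarrow> g \<in> coset g H"
  unfolding coset_def add_subgroup_def by force

lemma coset_eq:
  assumes H: "add_subgroup H" and "z \<in> coset x H" "z \<in> coset y H"
  shows "coset x H = coset y H"
proof -
  have cl: "0 \<in> H" "\<And>a b. a \<in> H \<Longrightarrow> b \<in> H \<Longrightarrow> a + b \<in> H" "\<And>a. a \<in> H \<Longrightarrow> - a \<in> H"
    using H unfolding add_subgroup_def by auto
  obtain h1 h2 where h: "h1 \<in> H" "h2 \<in> H" "z = x + h1" "z = y + h2"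
    using assms unfolding coset_def by auto
  have sub: "coset x H \<subseteq> coset y H" if "x + h1 = y + h2" "h1 \<in> H" "h2 \<in> H" for x y h1 h2
  proof
    fix w assume "w \<in> coset x H"
    then obtain k where k: "k \<in> H" "w = x + k" unfolding coset_def by auto
    have "x = (x + h1) + - h1" by simp
    also have "\<dots> = y + h2 + - h1" using that(1) by simp
    finally have "w = y + h2 + - h1 + k" using k by simp
    then have "w = y + (h2 + - h1 + k)" by (simp only: add.assoc)
    moreover have "h2 + - h1 + k \<in> H" using cl(2)[OF cl(2)[OF that(3) cl(3)[OF that(2)]] k(1)] .
    ultimately show "w \<in> coset y H" unfolding coset_def by auto
  qed
  show ?thesis using sub[of x h1 y h2] sub[of y h2 x h1] h by auto
qed

lemma lagrange:
  fixes H :: "'a::{finite,ab_group_add} set"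
  assumes H: "add_subgroup H"
  shows "card H * card (quotient_cosets H) = card (UNIV :: 'a set)"
proof -
  have U: "\<Union>(quotient_cosets H) = UNIV"
  proof (rule set_eqI)
    fix x :: 'a
    have "x \<in> coset x H" by (rule coset_self[OF H])
    then show "x \<in> \<Union>(quotient_cosets H) \<longleftrightarrow> x \<in> UNIV" unfolding quotient_cosets_def by blast
  qed
  have "card H * card (quotient_cosets H) = card (\<Union>(quotient_cosets H))"
  proof (rule card_partition)
    show "card c = card H" if "c \<in> quotient_cosets H" for c
      using that coset_card unfolding quotient_cosets_def by auto
    show "c1 \<inter> c2 = {}" if p1: "c1 \<in> quotient_cosets H" and p2: "c2 \<in> quotient_cosets H" and p3: "c1 \<noteq> c2" for c1 c2
    proof -
      obtain x where x: "c1 = coset x H" using p1 unfolding quotient_cosets_def by blast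
      obtain y where y: "c2 = coset y H" using p2 unfolding quotient_cosets_def by blast
      note x y
      then show ?thesis using coset_eq[OF H, of _ x y] p3 by blast
    qed
  qed auto
  then show ?thesis using U by simp
qed


lemma growth:
  fixes A :: "'a::{finite,ab_group_add} set"
  assumes notU: "sumset_pow A r \<noteq> UNIV"
    and kap: "\<And>X. X \<noteq> {} \<Longrightarrow> ss X (insert 0 A) \<noteq> UNIV \<Longrightarrow> c \<le> int (card (ss X (insert 0 A))) - int (card X)"
  shows "Suc i \<le> r \<Longrightarrow> int (card (sumset_pow A (Suc i))) \<ge> int (card (insert 0 A)) + int i * c"
proof (induction i)
  case 0 show ?case by (simp only: sp_one)
next
  case (Suc i)
  have ne: "sumset_pow A (Suc i) \<noteq> {}" using sp_zero by blast
  have "sumset_pow A (Suc (Suc i)) \<subseteq> sumset_pow A r" by (rule sp_mono) (use Suc.prems in simp)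
  then have "sumset_pow A (Suc (Suc i)) \<noteq> UNIV" using notU by (metis subset_UNIV subset_antisym)
  then have "ss (sumset_pow A (Suc i)) (insert 0 A) \<noteq> UNIV" by (metis sp_Suc)
  from kap[OF ne this] have "c \<le> int (card (sumset_pow A (Suc (Suc i)))) - int (card (sumset_pow A (Suc i)))"
    by (metis sp_Suc)
  moreover have "int (card (sumset_pow A (Suc i))) \<ge> int (card (insert 0 A)) + int i * c"
    using Suc.IH Suc.prems by simp
  ultimately show ?case by (simp add: algebra_simps)
qed

lemma real_part:
  fixes r N b a be h :: real
  assumes r: "r \<ge> 4" and N: "N \<ge> 2 * b + (r - 3) * (be - h)" and ab: "a \<le> b" and bb: "b \<le> be"
    and a: "a > 3 / (2 * r) * N"
  shows "N > r * (be - h)" "be < 3 * h"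
proof -
  have "2 * r * a > 3 * N" using a r by (simp add: field_simps)
  then have b3: "2 * r * b > 3 * N" using ab r by (smt (verit) mult_left_mono)
  have "N * r \<ge> (2 * b + (r - 3) * (be - h)) * r" using N r by (simp add: mult_right_mono)
  then have "N * r > 3 * N + r * (r - 3) * (be - h)" using b3 by (simp add: algebra_simps)
  then have "(r - 3) * N > (r - 3) * (r * (be - h))" by (simp add: algebra_simps)
  then show n1: "N > r * (be - h)" using r by (simp add: mult_less_cancel_left)
  have "2 * r * be \<ge> 2 * r * b" using bb r by simp
  then have "2 * r * be > 3 * (r * (be - h))" using b3 n1 by linarith
  then have "r * (2 * be) > r * (3 * (be - h))" by (simp add: algebra_simps)
  then have "2 * be > 3 * (be - h)" using r by (simp add: mult_less_cancel_left)
  then show "be < 3 * h" by simp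
qed

lemma coset_sub_ss:
  fixes H B :: "'a::ab_group_add set"
  assumes "g \<in> B" shows "coset g H \<subseteq> ss H B"
proof
  fix z assume "z \<in> coset g H"
  then obtain x where "x \<in> H" "z = g + x" unfolding coset_def by auto
  then have "z = x + g" by (simp add: add.commute)
  then show "z \<in> ss H B" unfolding ss_def using \<open>x \<in> H\<close> assms by blast
qed

lemma coset_disj_sub:
  fixes H :: "'a::ab_group_add set"
  assumes H: "add_subgroup H" and "g \<notin> H" shows "H \<inter> coset g H = {}"
proof (rule ccontr)
  assume "H \<inter> coset g H \<noteq> {}"
  then obtain x where x: "x \<in> H" "g + x \<in> H" unfolding coset_def by auto
  have "g = (g + x) + - x" by simp
  moreover have "(g + x) + - x \<in> H" using H x unfolding add_subgroup_def by blast
  ultimately show False using assms by simp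
qed

lemma coset_disj:
  fixes H :: "'a::ab_group_add set"
  assumes H: "add_subgroup H" and "g' \<notin> coset g H" shows "coset g' H \<inter> coset g H = {}"
proof (rule ccontr)
  assume "coset g' H \<inter> coset g H \<noteq> {}"
  then obtain z where "z \<in> coset g' H" "z \<in> coset g H" by blast
  then have "coset g' H = coset g H" by (rule coset_eq[OF H])
  then show False using coset_self[OF H, of g'] assms by simp
qed

theorem theorem2p10:
  fixes A :: "'a::{finite, ab_group_add} set" and \<rho> :: nat
  assumes "\<rho> \<ge> 4"
    and "gen_subgroup A = UNIV"
    and "diam_plus A \<ge> enat \<rho>"
    and "real (card A) > 3 / (2 * real \<rho>) * real (card (UNIV :: 'a set))"
  shows "\<exists>H g. add_subgroup H \<and>
           A \<subseteq> H \<union> coset g H \<and>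
           real (card A) > (2 - (real \<rho> - 3) / (2 * real \<rho>)) * real (card H) \<and>
           quotient_cyclic H \<and>
           \<rho> + 1 \<le> card (quotient_cosets H) \<and>
           real (card (quotient_cosets H)) < 4 / 3 * real \<rho> \<and>
           coset_generates g H"
proof -
  define B where "B = insert 0 A"
  define n where "n = card (UNIV :: 'a set)"
  have Sr: "sumset_pow A (\<rho> - 1) \<noteq> UNIV" by (rule diam_not_univ) (use assms in auto)
  have "B \<subseteq> sumset_pow A (\<rho> - 1)" unfolding B_def using sp_mono[of 1 "\<rho> - 1" A] assms(1) sp_one[of A] by simp
  then have BU: "B \<noteq> UNIV" using Sr by auto
  have "0 \<in> B" unfolding B_def by simp
  obtain H where sg: "add_subgroup H" and HB: "ss H B \<noteq> UNIV"
    and kp: "\<And>X. X \<noteq> {} \<Longrightarrow> ss X B \<noteq> UNIV \<Longrightarrow> int (card (ss H B)) - int (card H) \<le> int (card (ss X B)) - int (card X)"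
    using hamidoune[OF \<open>0 \<in> B\<close> BU] by blast
  have H0: "0 \<in> H" using sg unfolding add_subgroup_def by blast
  have BHB: "B \<subseteq> ss H B" unfolding ss_def using H0 by force
  have HHB: "H \<subseteq> ss H B" by (rule ss_zero) fact
  have gr: "int (card (sumset_pow A (Suc (\<rho> - 3)))) \<ge> int (card B) + int (\<rho> - 3) * (int (card (ss H B)) - int (card H))"
    unfolding B_def
    by (rule growth[OF Sr]) (use kp assms(1) in \<open>auto simp: B_def\<close>)
  obtain y where y: "y \<notin> sumset_pow A (\<rho> - 1)" using Sr by blast
  define Y where "Y = (\<lambda>b. y - b) ` B"
  have cY: "card Y = card B" unfolding Y_def by (rule card_image) (simp add: inj_on_def)
  have disj: "sumset_pow A (Suc (\<rho> - 3)) \<inter> Y = {}"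
  proof (rule ccontr)
    assume "sumset_pow A (Suc (\<rho> - 3)) \<inter> Y \<noteq> {}"
    then obtain b where b: "b \<in> B" "y - b \<in> sumset_pow A (Suc (\<rho> - 3))" unfolding Y_def by blast
    have "y = (y - b) + b" by simp
    then have "y \<in> ss (sumset_pow A (Suc (\<rho> - 3))) B" unfolding ss_def using b by blast
    then have "y \<in> sumset_pow A (Suc (Suc (\<rho> - 3)))" unfolding B_def by (metis sp_Suc)
    moreover have "Suc (Suc (\<rho> - 3)) = \<rho> - 1" using assms(1) by simp
    ultimately show False using y by simp
  qed
  have "card (sumset_pow A (Suc (\<rho> - 3))) + card Y = card (sumset_pow A (Suc (\<rho> - 3)) \<union> Y)"
    using disj by (simp add: card_Un_disjoint)
  also have "\<dots> \<le> n" unfolding n_def by (rule card_mono) auto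
  finally have nge: "int n \<ge> 2 * int (card B) + int (\<rho> - 3) * (int (card (ss H B)) - int (card H))"
    using gr cY by linarith
  have cAB: "card A \<le> card B" unfolding B_def by (rule card_mono) auto
  have cBHB: "card B \<le> card (ss H B)" by (rule card_mono[OF _ BHB]) simp
  have r3: "real (\<rho> - 3) = real \<rho> - 3" using assms(1) by simp
  have nge': "real n \<ge> 2 * real (card B) + (real \<rho> - 3) * (real (card (ss H B)) - real (card H))"
  proof -
    have "real_of_int (int n) \<ge> real_of_int (2 * int (card B) + int (\<rho> - 3) * (int (card (ss H B)) - int (card H)))"
      using nge by (simp only: of_int_le_iff)
    then show ?thesis using r3 by simp
  qed
  have rp: "real n > real \<rho> * (real (card (ss H B)) - real (card H))" "real (card (ss H B)) < 3 * real (card H)"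
    using real_part[OF _ nge', of "real (card A)"] assms(1,4) cAB cBHB unfolding n_def by auto
  have "\<not> B \<subseteq> H"
  proof
    assume "B \<subseteq> H"
    then have "A \<subseteq> H" unfolding B_def by simp
    then have "gen_subgroup A \<subseteq> H" unfolding gen_subgroup_def using sg by blast
    then have "H = UNIV" using assms(2) by (metis top_le)
    then show False using HB HHB by auto
  qed
  then obtain g where g: "g \<in> B" "g \<notin> H" by blast
  have gA: "g \<in> A" using g H0 unfolding B_def by auto
  have BHg: "B \<subseteq> H \<union> coset g H"
  proof (rule ccontr)
    assume "\<not> B \<subseteq> H \<union> coset g H"
    then obtain g' where g': "g' \<in> B" "g' \<notin> H" "g' \<notin> coset g H" by blast
    have d1: "H \<inter> coset g H = {}" by (rule coset_disj_sub[OF sg g(2)])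
    have d2: "(H \<union> coset g H) \<inter> coset g' H = {}"
      using coset_disj_sub[OF sg g'(2)] coset_disj[OF sg g'(3)] by blast
    have "card (H \<union> coset g H \<union> coset g' H) = card H + card H + card H"
      using d1 d2 by (simp add: card_Un_disjoint coset_card)
    moreover have "H \<union> coset g H \<union> coset g' H \<subseteq> ss H B"
      using HHB coset_sub_ss[OF g(1)] coset_sub_ss[OF g'(1)] by blast
    ultimately have "card H + card H + card H \<le> card (ss H B)" by (metis card_mono finite)
    then show False using rp(2) by linarith
  qed
  have eqHB: "ss H B = H \<union> coset g H"
  proof
    show "H \<union> coset g H \<subseteq> ss H B" using HHB coset_sub_ss[OF g(1)] by blast
    show "ss H B \<subseteq> H \<union> coset g H"
    proof
      fix z assume "z \<in> ss H B"
      then obtain x b where xb: "x \<in> H" "b \<in> B" "z = x + b" unfolding ss_def by blast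
      show "z \<in> H \<union> coset g H"
      proof (cases "b \<in> H")
        case True
        then show ?thesis using xb sg unfolding add_subgroup_def by blast
      next
        case False
        then obtain k where k: "k \<in> H" "b = g + k" using BHg xb(2) unfolding coset_def by blast
        have "z = g + (x + k)" using xb k by (simp add: algebra_simps)
        moreover have "x + k \<in> H" using xb k sg unfolding add_subgroup_def by blast
        ultimately show ?thesis unfolding coset_def by blast
      qed
    qed
  qed
  have cHB: "card (ss H B) = 2 * card H"
    unfolding eqHB using coset_disj_sub[OF sg g(2)] by (simp add: card_Un_disjoint coset_card)
  define m where "m = card (quotient_cosets H)"
  have lag: "card H * m = n" unfolding m_def n_def by (rule lagrange[OF sg])
  have hpos: "card H > 0" using H0 by (auto simp: card_gt_0_iff)
  have nrh: "real n > real \<rho> * real (card H)" using rp(1) cHB by simp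
  have nreal: "real n = real m * real (card H)" using lag by (metis of_nat_mult mult.commute)
  have mgt: "real m > real \<rho>" using nrh nreal hpos by (simp add: mult_less_cancel_right)
  have m1: "\<rho> + 1 \<le> m" using mgt by simp
  have AHg: "A \<subseteq> H \<union> coset g H" using BHg unfolding B_def by simp
  have cA2: "card A \<le> 2 * card H"
  proof -
    have "card A \<le> card (H \<union> coset g H)" by (rule card_mono[OF _ AHg]) simp
    also have "\<dots> = 2 * card H" using cHB eqHB by simp
    finally show ?thesis .
  qed
  have rho_pos: "real \<rho> > 0" using assms(1) by simp
  have aN: "real (card A) > 3 / (2 * real \<rho>) * (real m * real (card H))"
    using assms(4) nreal unfolding n_def by simp
  have mlt: "real m < 4 / 3 * real \<rho>"
  proof -
    have "2 * real (card H) > 3 / (2 * real \<rho>) * (real m * real (card H))" using aN cA2 by linarith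
    then have "2 * real (card H) * (2 * real \<rho>) > 3 * (real m * real (card H))"
      using rho_pos by (simp add: field_simps)
    then have "real (card H) * (4 * real \<rho>) > real (card H) * (3 * real m)" by (simp add: algebra_simps)
    then have "4 * real \<rho> > 3 * real m" using hpos by (simp add: mult_less_cancel_left)
    then show ?thesis by simp
  qed
  have aH: "real (card A) > (2 - (real \<rho> - 3) / (2 * real \<rho>)) * real (card H)"
  proof -
    have "(2 - (real \<rho> - 3) / (2 * real \<rho>)) = 3 / (2 * real \<rho>) * (real \<rho> + 1)"
      using rho_pos by (simp add: field_simps)
    moreover have "3 / (2 * real \<rho>) * (real \<rho> + 1) * real (card H) \<le> 3 / (2 * real \<rho>) * (real m * real (card H))"
    proof -
      have "(real \<rho> + 1) * real (card H) \<le> real m * real (card H)" using m1 by (intro mult_right_mono) auto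
      then have "3 / (2 * real \<rho>) * ((real \<rho> + 1) * real (card H)) \<le> 3 / (2 * real \<rho>) * (real m * real (card H))"
        by (rule mult_left_mono) (use rho_pos in simp)
      then show ?thesis by (simp only: mult.assoc)
    qed
    ultimately show ?thesis using aN by simp
  qed
  have cg: "coset_generates g H"
    unfolding coset_generates_def
  proof -
    have "UNIV \<subseteq> K" if K: "add_subgroup K" "insert g H \<subseteq> K" for K
    proof -
      have "coset g H \<subseteq> K" using K unfolding coset_def add_subgroup_def by blast
      then have "A \<subseteq> K" using AHg K by blast
      then have "gen_subgroup A \<subseteq> K" unfolding gen_subgroup_def using K by blast
      then show ?thesis using assms(2) by simp
    qed
    then show "gen_subgroup (insert g H) = UNIV" unfolding gen_subgroup_def by blast
  qed
  show ?thesis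
  proof (intro exI conjI)
    show "add_subgroup H" by (rule sg)
    show "A \<subseteq> H \<union> coset g H" by (rule AHg)
    show "real (card A) > (2 - (real \<rho> - 3) / (2 * real \<rho>)) * real (card H)" by (rule aH)
    show "quotient_cyclic H" unfolding quotient_cyclic_def using cg by blast
    show "\<rho> + 1 \<le> card (quotient_cosets H)" using m1 unfolding m_def .
    show "real (card (quotient_cosets H)) < 4 / 3 * real \<rho>" using mlt unfolding m_def .
    show "coset_generates g H" by (rule cg)
  qed
qed

end
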